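(* Let $H$ be a complex Hilbert space with inner product $\langle\cdot,\cdot\rangle$. Let $(e_k)_{k\ge0}$ and $(f_k)_{k\ge0}$ be sequences in $H$ with $\langle e_j,f_k\rangle=0$ for $j\ne k$ and $\langle e_k,f_k\rangle\ne0$ for all $k$. Let $P_k(h):=\frac{\langle h,f_k\rangle}{\langle e_k,f_k\rangle}e_k$, so $\|P_k\|=\|e_k\|\|f_k\|/|\langle e_k,f_k\rangle|$. Let $A=(a_{nk})_{n,k\ge0}$ be complex scalars with $\sum_{k\ge0}|a_{nk}|\|P_k\|<\infty$ for each $n$, and define \[ S_n^A(h):=\sum_{k\ge0}a_{nk}\frac{\langle h,f_k\rangle}{\langle e_k,f_k\rangle}e_k,\qquad (S_n^A)^*(h)=\sum_{k\ge0}\overline{a_{nk}}\frac{\langle h,e_k\rangle}{\langle f_k,e_k\rangle}f_k. \] Then the following are equivalent: (i) $S_n^A(h)\to h$ weakly for all $h\in H$; (ii) $S_n^A(h)\to h$ in norm for all $h\in H$; (iii) $(S_n^A)^*(h)\to h$ weakly for all $h\in H$; (iv) $(S_n^A)^*(h)\to h$ in norm for all $h\in H$.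
   Context: $(S_n^A)^*$ is the Hilbert-space adjoint of $S_n^A$. *)

theory Defs
  imports "HOL-Analysis.Analysis"
begin

class complex_vector = real_vector +
  fixes scaleC :: "complex \<Rightarrow> 'a \<Rightarrow> 'a"
  assumes scaleC_add_right: "scaleC a (x + y) = scaleC a x + scaleC a y"
    and scaleC_add_left: "scaleC (a + b) x = scaleC a x + scaleC b x"
    and scaleC_scaleC: "scaleC a (scaleC b x) = scaleC (a * b) x"
    and scaleC_one: "scaleC 1 x = x"
    and scaleR_scaleC: "scaleR r x = scaleC (complex_of_real r) x"

class complex_inner = complex_vector + real_normed_vector +
  fixes cinner :: "'a \<Rightarrow> 'a \<Rightarrow> complex"
  assumes cinner_add_left: "cinner (x + y) z = cinner x z + cinner y z"
    and cinner_scaleC_left: "cinner (scaleC r x) y = r * cinner x y"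
    and cinner_commute: "cinner x y = cnj (cinner y x)"
    and cinner_ge_zero: "0 \<le> Re (cinner x x)"
    and cinner_eq_zero_iff: "cinner x x = 0 \<longleftrightarrow> x = 0"
    and norm_eq_sqrt_cinner: "norm x = sqrt (Re (cinner x x))"

class chilbert_space = complex_inner + complete_space

definition SA :: "(nat \<Rightarrow> nat \<Rightarrow> complex) \<Rightarrow> (nat \<Rightarrow> 'a::chilbert_space) \<Rightarrow> (nat \<Rightarrow> 'a)
    \<Rightarrow> nat \<Rightarrow> 'a \<Rightarrow> 'a" where
  "SA a e f n h = (\<Sum>k. scaleC (a n k * (cinner h (f k) / cinner (e k) (f k))) (e k))"

definition SA_adj :: "(nat \<Rightarrow> nat \<Rightarrow> complex) \<Rightarrow> (nat \<Rightarrow> 'a::chilbert_space) \<Rightarrow> (nat \<Rightarrow> 'a)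
    \<Rightarrow> nat \<Rightarrow> 'a \<Rightarrow> 'a" where
  "SA_adj a e f n h = (\<Sum>k. scaleC (cnj (a n k) * (cinner h (e k) / cinner (f k) (e k))) (f k))"

definition weak_conv :: "(nat \<Rightarrow> 'a::chilbert_space) \<Rightarrow> 'a \<Rightarrow> bool" where
  "weak_conv x l \<longleftrightarrow> (\<forall>y. (\<lambda>n. cinner (x n) y) \<longlonglongrightarrow> cinner l y)"

end

theory Submission
  imports Defs
begin

subclass (in chilbert_space) banach ..

lemma scaleC_zero_left [simp]: "scaleC 0 (x::'a::complex_vector) = 0"
proof -
  have "scaleC 0 x = scaleC 0 x + scaleC 0 x" using scaleC_add_left[of 0 0 x] by simp
  then show ?thesis by simp
qed

lemma scaleC_zero_right [simp]: "scaleC c (0::'a::complex_vector) = 0"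
proof -
  have "scaleC c (0::'a) = scaleC c (0 + 0)" by simp
  also have "\<dots> = scaleC c 0 + scaleC c 0" by (rule scaleC_add_right)
  finally show ?thesis by simp
qed

lemma scaleC_minus_right: "scaleC c (- x::'a::complex_vector) = - scaleC c x"
proof -
  have "scaleC c (- x) + scaleC c x = 0" using scaleC_add_right[of c "-x" x] by simp
  then show ?thesis by (simp add: eq_neg_iff_add_eq_0)
qed

lemma scaleC_diff_right: "scaleC c (x - y::'a::complex_vector) = scaleC c x - scaleC c y"
  by (simp only: diff_conv_add_uminus scaleC_add_right scaleC_minus_right)

lemma scaleC_sum_right: "scaleC c (sum g A::'a::complex_vector) = (\<Sum>i\<in>A. scaleC c (g i))"
  by (induction A rule: infinite_finite_induct) (auto simp: scaleC_add_right)

lemma cinner_zero_left [simp]: "cinner (0::'a::complex_inner) y = 0"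
proof -
  have "cinner (0::'a) y = cinner 0 y + cinner 0 y" using cinner_add_left[of 0 0 y] by simp
  then show ?thesis by simp
qed

lemma cinner_zero_right [simp]: "cinner (x::'a::complex_inner) 0 = 0"
  by (subst cinner_commute) simp

lemma cinner_minus_left: "cinner (- x::'a::complex_inner) y = - cinner x y"
proof -
  have "cinner (- x) y + cinner x y = 0" using cinner_add_left[of "-x" x y] by simp
  then show ?thesis by (simp add: eq_neg_iff_add_eq_0)
qed

lemma cinner_diff_left: "cinner (x - z::'a::complex_inner) y = cinner x y - cinner z y"
  by (simp only: diff_conv_add_uminus cinner_add_left cinner_minus_left)

lemma cinner_add_right: "cinner (x::'a::complex_inner) (y + z) = cinner x y + cinner x z"
  by (subst (1 2 3) cinner_commute) (simp add: cinner_add_left)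

lemma cinner_diff_right: "cinner (x::'a::complex_inner) (y - z) = cinner x y - cinner x z"
  by (subst (1 2 3) cinner_commute) (simp add: cinner_diff_left)

lemma cinner_scaleC_right: "cinner (x::'a::complex_inner) (scaleC r y) = cnj r * cinner x y"
  by (subst (1 2) cinner_commute) (simp add: cinner_scaleC_left)

lemma cinner_scaleR_left: "cinner (scaleR r x::'a::complex_inner) y = of_real r * cinner x y"
  by (simp add: scaleR_scaleC cinner_scaleC_left)

lemma cinner_scaleR_right: "cinner (x::'a::complex_inner) (scaleR r y) = of_real r * cinner x y"
  by (simp add: scaleR_scaleC cinner_scaleC_right)

lemma cinner_sum_left: "cinner (sum g A::'a::complex_inner) y = (\<Sum>i\<in>A. cinner (g i) y)"
  by (induction A rule: infinite_finite_induct) (auto simp: cinner_add_left)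

lemma cinner_self: "cinner (x::'a::complex_inner) x = of_real ((norm x)^2)"
proof -
  have "Im (cinner x x) = - Im (cinner x x)" using arg_cong[OF cinner_commute[of x x], of Im] by simp
  then have "Im (cinner x x) = 0" by simp
  moreover have "Re (cinner x x) = (norm x)^2" using norm_eq_sqrt_cinner[of x] cinner_ge_zero[of x] by simp
  ultimately show ?thesis by (simp add: complex_eq_iff)
qed

lemma cmod_cinner_commute: "cmod (cinner (x::'a::complex_inner) y) = cmod (cinner y x)"
  by (subst cinner_commute) (simp only: complex_mod_cnj)

lemma norm_scaleC: "norm (scaleC c (x::'a::complex_inner)) = cmod c * norm x"
proof -
  have "(norm (scaleC c x))^2 = (cmod c * norm x)^2"
  proof -
    have "of_real ((norm (scaleC c x))^2) = cinner (scaleC c x) (scaleC c x)" by (simp add: cinner_self)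
    also have "\<dots> = (c * cnj c) * cinner x x" by (simp add: cinner_scaleC_left cinner_scaleC_right)
    also have "\<dots> = of_real ((cmod c)^2) * of_real ((norm x)^2)"
      by (metis cinner_self complex_norm_square)
    also have "\<dots> = of_real ((cmod c * norm x)^2)"
      by (simp add: power_mult_distrib)
    finally show ?thesis using of_real_eq_iff by blast
  qed
  then show ?thesis by (simp add: power2_eq_iff_nonneg)
qed

lemma norm_sub_proj:
  fixes x y :: "'a::complex_inner"
  assumes "y \<noteq> 0"
  shows "(norm (x - scaleC (cinner x y / of_real ((norm y)^2)) y))^2
         = (norm x)^2 - (cmod (cinner x y))^2 / (norm y)^2"
proof -
  define c where "c = cinner x y"
  define N where "N = (norm y)^2"
  define t where "t = c / of_real N"
  have N: "N \<noteq> 0" using assms by (simp add: N_def)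
  have cc: "c * cnj c = of_real ((cmod c)^2)" by (metis complex_norm_square)
  have e1: "cnj t * c = of_real ((cmod c)^2 / N)" using cc by (simp add: t_def mult.commute)
  have e2: "t * cnj c = of_real ((cmod c)^2 / N)" using cc by (simp add: t_def)
  have e3: "t * cnj t * cinner y y = of_real ((cmod c)^2 / N)"
  proof -
    have "t * cnj t * cinner y y = (c * cnj c) / (of_real N * of_real N) * of_real N"
      by (simp add: t_def cinner_self N_def)
    also have "\<dots> = of_real ((cmod c)^2 / N)" using N cc by (simp add: field_simps)
    finally show ?thesis .
  qed
  have "cinner (x - scaleC t y) (x - scaleC t y)
        = cinner x x - cnj t * c - t * cnj c + t * cnj t * cinner y y"
    by (simp add: cinner_diff_left cinner_diff_right cinner_scaleC_left cinner_scaleC_right c_def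
          algebra_simps cinner_commute[of y x])
  also have "\<dots> = of_real ((norm x)^2 - (cmod c)^2 / N)"
    unfolding e1 e2 e3 cinner_self[of x] by simp
  finally show ?thesis unfolding t_def c_def N_def
    by (metis cinner_self of_real_eq_iff)
qed

lemma cauchy_schwarz: "cmod (cinner (x::'a::complex_inner) y) \<le> norm x * norm y"
proof (cases "y = 0")
  case False
  have "0 \<le> (norm (x - scaleC (cinner x y / of_real ((norm y)^2)) y))^2" by (rule zero_le_power2)
  then have "(cmod (cinner x y))^2 / (norm y)^2 \<le> (norm x)^2"
    unfolding norm_sub_proj[OF False, of x] by linarith
  moreover have "(norm y)^2 > 0" using False by simp
  ultimately have "(cmod (cinner x y))^2 \<le> (norm x)^2 * (norm y)^2"
    by (simp only: pos_divide_le_eq)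
  then have "(cmod (cinner x y))^2 \<le> (norm x * norm y)^2"
    by (simp only: power_mult_distrib)
  then show ?thesis by (rule power2_le_imp_le) simp
qed simp

lemma bl_cinner_right: "bounded_linear (\<lambda>y. cinner (x::'a::complex_inner) y)"
  by (rule bounded_linear_intro[where K="norm x"])
     (auto simp: cinner_add_right cinner_scaleR_right scaleR_conv_of_real,
      metis cauchy_schwarz mult.commute)

lemma bl_cinner_left: "bounded_linear (\<lambda>x. cinner (x::'a::complex_inner) y)"
  by (rule bounded_linear_intro[where K="norm y"])
     (auto simp: cinner_add_left cinner_scaleR_left scaleR_conv_of_real cauchy_schwarz)

lemma bl_scaleC: "bounded_linear (scaleC c :: 'a::complex_inner \<Rightarrow> 'a)"
proof (rule bounded_linear_intro[where K="cmod c"])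
  fix r x show "scaleC c (r *\<^sub>R (x::'a)) = r *\<^sub>R scaleC c x"
    by (simp add: scaleR_scaleC scaleC_scaleC mult.commute)
qed (auto simp: scaleC_add_right norm_scaleC)

lemma ubp:
  fixes T :: "'i \<Rightarrow> 'a::banach \<Rightarrow> 'b::real_normed_vector"
  assumes bl: "\<And>i. bounded_linear (T i)" and pb: "\<And>x. \<exists>B. \<forall>i. norm (T i x) \<le> B"
  shows "\<exists>M. \<forall>i x. norm (T i x) \<le> M * norm x"
proof -
  define F where "F m = {x. \<forall>i. norm (T i x) \<le> real m}" for m :: nat
  have clF: "closed (F m)" for m
  proof -
    have "F m = (\<Inter>i. {x. norm (T i x) \<le> real m})" by (auto simp: F_def)
    moreover have "closed {x. norm (T i x) \<le> real m}" for i
      by (intro closed_Collect_le continuous_on_norm linear_continuous_on bl continuous_on_const)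
    ultimately show ?thesis by auto
  qed
  have U: "\<Union>(range F) = UNIV"
  proof safe
    fix x
    obtain B where B: "\<forall>i. norm (T i x) \<le> B" using pb by blast
    have "B \<le> real (nat \<lceil>B\<rceil>)" by linarith
    then have "x \<in> F (nat \<lceil>B\<rceil>)" using B by (auto simp: F_def intro: order_trans)
    then show "x \<in> \<Union>(range F)" by blast
  qed simp
  have "\<exists>m. interior (F m) \<noteq> {}"
  proof (rule ccontr)
    assume "\<not> ?thesis"
    then have "euclidean interior_of \<Union>(range F) = {}"
      by (intro Baire_category_alt) (auto simp: completely_metrizable_space_euclidean clF
          simp flip: closed_closedin)
    then show False using U by simp
  qed
  then obtain m x0 where "x0 \<in> interior (F m)" by blast
  then obtain r where r: "r > 0" "ball x0 r \<subseteq> F m"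
    by (meson interior_subset open_contains_ball open_interior subset_trans)
  have small: "norm (T i y) \<le> 2 * real m" if "norm y < r" for i y
  proof -
    have "x0 + y \<in> F m" "x0 \<in> F m" using r that by (auto simp: dist_norm)
    then have "norm (T i (x0 + y)) \<le> real m" "norm (T i x0) \<le> real m" by (auto simp: F_def)
    moreover have "T i y = T i (x0 + y) - T i x0"
      using linear_diff[OF bounded_linear.linear[OF bl]] by (metis add_diff_cancel_left')
    ultimately show ?thesis by (smt (verit) norm_triangle_ineq4)
  qed
  have "norm (T i x) \<le> (4 * real m / r) * norm x" for i x
  proof (cases "x = 0")
    case True then show ?thesis using linear_0[OF bounded_linear.linear[OF bl]] by simp
  next
    case False
    then have nx: "norm x > 0" by simp
    define c where "c = r / (2 * norm x)"
    have c: "c > 0" using r nx by (simp add: c_def)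
    have "norm (c *\<^sub>R x) < r" using r nx by (simp add: c_def)
    then have "norm (T i (c *\<^sub>R x)) \<le> 2 * real m" by (rule small)
    then have "c * norm (T i x) \<le> 2 * real m" using c linear_scale[OF bounded_linear.linear[OF bl]] by simp
    then have "norm (T i x) \<le> 2 * real m / c" using c by (simp add: field_simps)
    also have "\<dots> = (4 * real m / r) * norm x" using r nx by (simp add: c_def field_simps)
    finally show ?thesis .
  qed
  then show ?thesis by blast
qed

lemma bl_scaleC_left: "bounded_linear (\<lambda>c. scaleC c (x::'a::complex_inner))"
proof (rule bounded_linear_intro[where K="norm x"])
  fix r :: real and c :: complex
  have "scaleC (r *\<^sub>R c) x = scaleC (of_real r * c) x" by (simp only: scaleR_conv_of_real)
  also have "\<dots> = scaleC (of_real r) (scaleC c x)" by (simp only: scaleC_scaleC)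
  also have "\<dots> = r *\<^sub>R scaleC c x" by (simp only: scaleR_scaleC)
  finally show "scaleC (r *\<^sub>R c) x = r *\<^sub>R scaleC c x" .
next
  fix b c :: complex show "scaleC (b + c) x = scaleC b x + scaleC c x" by (rule scaleC_add_left)
next
  fix c :: complex show "norm (scaleC c x) \<le> norm c * norm x" by (simp add: norm_scaleC)
qed

lemma approx_orth:
  fixes w u :: "'a::complex_inner"
  assumes "\<And>t. (norm w)^2 \<le> (norm (w - scaleC t u))^2 + \<delta>"
  shows "(cmod (cinner w u))^2 \<le> \<delta> * (norm u)^2"
proof (cases "u = 0")
  case True then show ?thesis using assms[of 0] by simp
next
  case False
  have "(norm w)^2 \<le> (norm w)^2 - (cmod (cinner w u))^2 / (norm u)^2 + \<delta>"
    using assms[of "cinner w u / of_real ((norm u)^2)"] unfolding norm_sub_proj[OF False, of w] .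
  then have "(cmod (cinner w u))^2 / (norm u)^2 \<le> \<delta>" by linarith
  moreover have "(norm u)^2 > 0" using False by simp
  ultimately show ?thesis by (simp add: divide_le_eq)
qed

context
  fixes e f :: "nat \<Rightarrow> 'a::chilbert_space" and a :: "nat \<Rightarrow> nat \<Rightarrow> complex"
  assumes summ: "\<And>n. summable (\<lambda>k. norm (a n k) *
                  (norm (e k) * norm (f k) / norm (cinner (e k) (f k))))"
begin

lemma term_bound:
  "norm (scaleC (a n k * (cinner h (f k) / cinner (e k) (f k))) (e k))
   \<le> norm (a n k) * (norm (e k) * norm (f k) / norm (cinner (e k) (f k))) * norm h"
proof -
  have "norm (scaleC (a n k * (cinner h (f k) / cinner (e k) (f k))) (e k))
      = (norm (a n k) * norm (e k) / norm (cinner (e k) (f k))) * cmod (cinner h (f k))"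
    by (simp add: norm_scaleC norm_mult norm_divide)
  also have "\<dots> \<le> (norm (a n k) * norm (e k) / norm (cinner (e k) (f k))) * (norm h * norm (f k))"
    by (intro mult_left_mono cauchy_schwarz) auto
  also have "\<dots> = norm (a n k) * (norm (e k) * norm (f k) / norm (cinner (e k) (f k))) * norm h"
    by simp
  finally show ?thesis .
qed

lemma summable_norm_terms:
  "summable (\<lambda>k. norm (scaleC (a n k * (cinner h (f k) / cinner (e k) (f k))) (e k)))"
proof (rule summable_comparison_test'[where N=0])
  show "summable (\<lambda>k. norm (a n k) * (norm (e k) * norm (f k) / norm (cinner (e k) (f k))) * norm h)"
    using summ[of n] by (rule summable_mult2)
  fix k :: nat
  show "norm (norm (scaleC (a n k * (cinner h (f k) / cinner (e k) (f k))) (e k)))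
     \<le> norm (a n k) * (norm (e k) * norm (f k) / norm (cinner (e k) (f k))) * norm h"
    using term_bound[of n k h] by simp
qed

lemma summable_terms:
  "summable (\<lambda>k. scaleC (a n k * (cinner h (f k) / cinner (e k) (f k))) (e k))"
  by (rule summable_norm_cancel[OF summable_norm_terms])

lemma SA_sums:
  "(\<lambda>k. scaleC (a n k * (cinner h (f k) / cinner (e k) (f k))) (e k)) sums SA a e f n h"
  unfolding SA_def using summable_terms by (rule summable_sums)

lemma norm_SA_le:
  "norm (SA a e f n h) \<le> norm h * (\<Sum>k. norm (a n k) * (norm (e k) * norm (f k) / norm (cinner (e k) (f k))))"
proof -
  have "norm (SA a e f n h) \<le> (\<Sum>k. norm (scaleC (a n k * (cinner h (f k) / cinner (e k) (f k))) (e k)))"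
    unfolding SA_def by (rule summable_norm[OF summable_norm_terms])
  also have "\<dots> \<le> (\<Sum>k. norm (a n k) * (norm (e k) * norm (f k) / norm (cinner (e k) (f k))) * norm h)"
    by (intro suminf_le term_bound summable_norm_terms summable_mult2 summ)
  also have "\<dots> = (\<Sum>k. norm (a n k) * (norm (e k) * norm (f k) / norm (cinner (e k) (f k)))) * norm h"
    by (rule suminf_mult2[symmetric, OF summ])
  also have "\<dots> = norm h * (\<Sum>k. norm (a n k) * (norm (e k) * norm (f k) / norm (cinner (e k) (f k))))"
    by (rule mult.commute)
  finally show ?thesis .
qed

lemma SA_add: "SA a e f n (x + y) = SA a e f n x + SA a e f n y"
proof -
  have "(\<lambda>k. scaleC (a n k * (cinner (x + y) (f k) / cinner (e k) (f k))) (e k))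
     = (\<lambda>k. scaleC (a n k * (cinner x (f k) / cinner (e k) (f k))) (e k)
          + scaleC (a n k * (cinner y (f k) / cinner (e k) (f k))) (e k))"
    by (simp add: cinner_add_left add_divide_distrib distrib_left scaleC_add_left)
  then show ?thesis unfolding SA_def
    using suminf_add[OF summable_terms summable_terms] by simp
qed

lemma SA_scaleC: "SA a e f n (scaleC c x) = scaleC c (SA a e f n x)"
proof -
  have "(\<lambda>k. scaleC (a n k * (cinner (scaleC c x) (f k) / cinner (e k) (f k))) (e k))
     = (\<lambda>k. scaleC c (scaleC (a n k * (cinner x (f k) / cinner (e k) (f k))) (e k)))"
    by (simp add: cinner_scaleC_left scaleC_scaleC ac_simps)
  then show ?thesis unfolding SA_def
    using bounded_linear.suminf[OF bl_scaleC summable_terms] by simp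
qed

lemma bl_SA: "bounded_linear (SA a e f n)"
proof (rule bounded_linear_intro[where K="\<Sum>k. norm (a n k) * (norm (e k) * norm (f k) / norm (cinner (e k) (f k)))"])
  fix r :: real and x
  show "SA a e f n (r *\<^sub>R x) = r *\<^sub>R SA a e f n x"
    unfolding scaleR_scaleC by (rule SA_scaleC)
next
  fix x y show "SA a e f n (x + y) = SA a e f n x + SA a e f n y" by (rule SA_add)
next
  fix x show "norm (SA a e f n x) \<le> norm x * (\<Sum>k. norm (a n k) * (norm (e k) * norm (f k) / norm (cinner (e k) (f k))))"
    by (rule norm_SA_le)
qed

lemma cinner_SA:
  "cinner (SA a e f n h) y = (\<Sum>k. a n k * (cinner h (f k) / cinner (e k) (f k)) * cinner (e k) y)"
proof -
  have "(\<lambda>k. cinner (scaleC (a n k * (cinner h (f k) / cinner (e k) (f k))) (e k)) y) sums cinner (SA a e f n h) y"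
    by (rule bounded_linear.sums[OF bl_cinner_left SA_sums])
  then show ?thesis by (simp add: cinner_scaleC_left sums_iff)
qed

end

lemma SA_adj_eq: "SA_adj a e f = SA (\<lambda>n k. cnj (a n k)) f e"
  by (simp add: fun_eq_iff SA_def SA_adj_def)

lemma summ_swap:
  assumes "\<And>n. summable (\<lambda>k. norm (a n k) *
                  (norm (e k) * norm (f k) / norm (cinner (e k) (f k))))"
  shows "\<And>n. summable (\<lambda>k. norm (cnj (a n k)) *
                  (norm (f k) * norm (e k) / norm (cinner (f k) (e k))))"
  using assms by (simp add: cmod_cinner_commute[of "f _"] mult.commute)

lemma adjoint:
  fixes e f :: "nat \<Rightarrow> 'a::chilbert_space"
  assumes summ: "\<And>n. summable (\<lambda>k. norm (a n k) *
                  (norm (e k) * norm (f k) / norm (cinner (e k) (f k))))"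
  shows "cinner (SA a e f n h) y = cinner h (SA_adj a e f n y)"
proof -
  have X: "cinner (SA (\<lambda>n k. cnj (a n k)) f e n y) h
     = (\<Sum>k. cnj (a n k) * (cinner y (e k) / cinner (f k) (e k)) * cinner (f k) h)"
    by (rule cinner_SA[OF summ_swap[OF summ], where n=n and h=y and y=h])
  have S: "(\<lambda>k. cnj (a n k) * (cinner y (e k) / cinner (f k) (e k)) * cinner (f k) h) sums
          (\<Sum>k. cnj (a n k) * (cinner y (e k) / cinner (f k) (e k)) * cinner (f k) h)"
  proof -
    have "(\<lambda>k. cinner (scaleC (cnj (a n k) * (cinner y (e k) / cinner (f k) (e k))) (f k)) h)
          sums cinner (SA (\<lambda>n k. cnj (a n k)) f e n y) h"
      by (rule bounded_linear.sums[OF bl_cinner_left SA_sums[OF summ_swap[OF summ]]])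
    then show ?thesis unfolding X cinner_scaleC_left .
  qed
  have t: "cnj (cnj (a n k) * (cinner y (e k) / cinner (f k) (e k)) * cinner (f k) h)
        = a n k * (cinner h (f k) / cinner (e k) (f k)) * cinner (e k) y" for k
  proof -
    have 1: "cnj (cinner y (e k)) = cinner (e k) y" using cinner_commute[of "e k" y] by simp
    have 2: "cnj (cinner (f k) (e k)) = cinner (e k) (f k)" using cinner_commute[of "e k" "f k"] by simp
    have 3: "cnj (cinner (f k) h) = cinner h (f k)" using cinner_commute[of h "f k"] by simp
    show ?thesis
      by (simp only: complex_cnj_mult complex_cnj_divide complex_cnj_cnj 1 2 3) (simp add: divide_inverse ac_simps)
  qed
  have "cinner h (SA_adj a e f n y) = cnj (cinner (SA (\<lambda>n k. cnj (a n k)) f e n y) h)"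
    by (subst cinner_commute) (simp only: SA_adj_eq)
  also have "\<dots> = cnj (\<Sum>k. cnj (a n k) * (cinner y (e k) / cinner (f k) (e k)) * cinner (f k) h)"
    by (simp only: X)
  also have "\<dots> = (\<Sum>k. cnj (cnj (a n k) * (cinner y (e k) / cinner (f k) (e k)) * cinner (f k) h))"
  proof -
    have "(\<lambda>k. cnj (cnj (a n k) * (cinner y (e k) / cinner (f k) (e k)) * cinner (f k) h)) sums
          cnj (\<Sum>k. cnj (a n k) * (cinner y (e k) / cinner (f k) (e k)) * cinner (f k) h)"
      using S by (subst sums_cnj)
    then show ?thesis by (rule sums_unique)
  qed
  also have "\<dots> = (\<Sum>k. a n k * (cinner h (f k) / cinner (e k) (f k)) * cinner (e k) y)"
    by (simp only: t)
  also have "\<dots> = cinner (SA a e f n h) y" by (rule cinner_SA[OF summ, symmetric])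
  finally show ?thesis by simp
qed

lemma cmod_cinner_self: "cmod (cinner (x::'a::complex_inner) x) = (norm x)^2"
proof -
  have "cmod (cinner x x) = cmod (of_real ((norm x)^2))" by (simp only: cinner_self)
  also have "\<dots> = (norm x)^2" by (simp only: norm_of_real abs_power2 abs_norm_cancel)
  finally show ?thesis .
qed

lemma SA_e:
  fixes e f :: "nat \<Rightarrow> 'a::chilbert_space"
  assumes biorth: "\<And>j k. j \<noteq> k \<Longrightarrow> cinner (e j) (f k) = 0"
    and nondeg: "\<And>k. cinner (e k) (f k) \<noteq> 0"
  shows "SA a e f n (e j) = scaleC (a n j) (e j)"
proof -
  have "(\<lambda>k. scaleC (a n k * (cinner (e j) (f k) / cinner (e k) (f k))) (e k))
      = (\<lambda>k. if k = j then scaleC (a n j) (e j) else 0)"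
  proof
    fix k show "scaleC (a n k * (cinner (e j) (f k) / cinner (e k) (f k))) (e k)
      = (if k = j then scaleC (a n j) (e j) else 0)"
    proof (cases "k = j")
      case True then show ?thesis using nondeg[of k] by simp
    next
      case False then show ?thesis using biorth[of j k] by simp
    qed
  qed
  moreover have "(\<lambda>k. if k = j then scaleC (a n j) (e j) else 0) sums scaleC (a n j) (e j)"
    using sums_single[of j "\<lambda>_. scaleC (a n j) (e j)"] by simp
  ultimately show ?thesis unfolding SA_def by (simp add: sums_iff)
qed

lemma weak_to_norm:
  fixes e f :: "nat \<Rightarrow> 'a::chilbert_space" and a :: "nat \<Rightarrow> nat \<Rightarrow> complex"
  assumes biorth: "\<And>j k. j \<noteq> k \<Longrightarrow> cinner (e j) (f k) = 0"
    and nondeg: "\<And>k. cinner (e k) (f k) \<noteq> 0"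
    and summ: "\<And>n. summable (\<lambda>k. norm (a n k) *
                  (norm (e k) * norm (f k) / norm (cinner (e k) (f k))))"
    and W: "\<forall>h. weak_conv (\<lambda>n. SA a e f n h) h"
  shows "(\<lambda>n. SA a e f n h) \<longlonglongrightarrow> h"
proof -
  have W': "(\<lambda>n. cinner (SA a e f n x) y) \<longlonglongrightarrow> cinner x y" for x y
    using W unfolding weak_conv_def by blast
  have pw: "\<exists>B. \<forall>n. norm (SA a e f n x) \<le> B" for x
  proof -
    have "\<exists>M. \<forall>n y. norm (cinner (SA a e f n x) y) \<le> M * norm y"
    proof (rule ubp[of "\<lambda>n y. cinner (SA a e f n x) y"])
      fix n show "bounded_linear (\<lambda>y. cinner (SA a e f n x) y)" by (rule bl_cinner_right)
    next
      fix y
      have "Bseq (\<lambda>n. cinner (SA a e f n x) y)"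
        using W'[of x y] by (intro convergent_imp_Bseq convergentI)
      then show "\<exists>B. \<forall>n. norm (cinner (SA a e f n x) y) \<le> B" by (meson BseqE)
    qed
    then obtain M where M: "\<And>n y. cmod (cinner (SA a e f n x) y) \<le> M * norm y" by blast
    have "norm (SA a e f n x) \<le> \<bar>M\<bar>" for n
    proof (cases "SA a e f n x = 0")
      case True then show ?thesis by simp
    next
      case False
      define z where "z = SA a e f n x"
      have zpos: "0 < norm z" using False by (simp add: z_def)
      have "cmod (cinner z z) = (norm z)^2" by (rule cmod_cinner_self)
      then have "norm z * norm z \<le> M * norm z" using M[of n z] by (simp add: z_def power2_eq_square)
      then have "norm z \<le> M" by (rule mult_right_le_imp_le[OF _ zpos])
      then show ?thesis unfolding z_def by linarith
    qed
    then show ?thesis by blast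
  qed
  obtain M where M: "\<And>n x. norm (SA a e f n x) \<le> M * norm x"
    using ubp[of "SA a e f", OF bl_SA[OF summ] pw] by blast
  define Mp where "Mp = \<bar>M\<bar>"
  have Mp: "Mp \<ge> 0" by (simp add: Mp_def)
  have MpB: "norm (SA a e f n x) \<le> Mp * norm x" for n x
  proof -
    have "M * norm x \<le> Mp * norm x" unfolding Mp_def by (intro mult_right_mono) auto
    then show ?thesis using M[of n x] by linarith
  qed
  have conv_a: "(\<lambda>n. a n k) \<longlonglongrightarrow> 1" for k
  proof -
    have "(\<lambda>n. cinner (SA a e f n (e k)) (f k)) \<longlonglongrightarrow> cinner (e k) (f k)" by (rule W')
    moreover have "SA a e f n (e k) = scaleC (a n k) (e k)" for n by (rule SA_e[OF biorth nondeg])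
    ultimately have "(\<lambda>n. a n k * cinner (e k) (f k)) \<longlonglongrightarrow> cinner (e k) (f k)"
      by (simp add: cinner_scaleC_left)
    then have "(\<lambda>n. a n k * cinner (e k) (f k) / cinner (e k) (f k)) \<longlonglongrightarrow> cinner (e k) (f k) / cinner (e k) (f k)"
      by (rule tendsto_divide[OF _ tendsto_const nondeg[of k]])
    then show ?thesis using nondeg[of k] by simp
  qed
  define V where "V = {v. \<exists>N c. v = (\<Sum>k<N. scaleC (c k) (e k))}"
  have V0: "0 \<in> V" unfolding V_def by (auto intro!: exI[of _ 0])
  have Vext: "(\<Sum>k<N. scaleC (c k) (e k)) = (\<Sum>k<N'. scaleC (if k < N then c k else 0) (e k))"
    if "N \<le> N'" for N N' c
    by (rule sum.mono_neutral_cong_left) (use that in auto)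
  have Vlin: "v + scaleC t u \<in> V" if hv: "v \<in> V" and hu: "u \<in> V" for v u t
  proof -
    obtain N1 c1 where v: "v = (\<Sum>k<N1. scaleC (c1 k) (e k))" using hv unfolding V_def by blast
    obtain N2 c2 where u: "u = (\<Sum>k<N2. scaleC (c2 k) (e k))" using hu unfolding V_def by blast
    define N where "N = max N1 N2"
    define d1 where "d1 k = (if k < N1 then c1 k else 0)" for k
    define d2 where "d2 k = (if k < N2 then c2 k else 0)" for k
    have v': "v = (\<Sum>k<N. scaleC (d1 k) (e k))" unfolding v d1_def N_def by (rule Vext) simp
    have u': "u = (\<Sum>k<N. scaleC (d2 k) (e k))" unfolding u d2_def N_def by (rule Vext) simp
    define c where "c k = d1 k + t * d2 k" for k
    have "v + scaleC t u = (\<Sum>k<N. scaleC (c k) (e k))"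
      unfolding v' u' c_def by (simp add: scaleC_sum_right scaleC_add_left scaleC_scaleC sum.distrib)
    then show ?thesis unfolding V_def by blast
  qed
  have Vconv: "(\<lambda>n. SA a e f n v) \<longlonglongrightarrow> v" if hv: "v \<in> V" for v
  proof -
    obtain N c where v: "v = (\<Sum>k<N. scaleC (c k) (e k))" using hv unfolding V_def by blast
    have eq: "SA a e f n v = (\<Sum>k<N. scaleC (c k * a n k) (e k))" for n
    proof -
      have "SA a e f n v = (\<Sum>k<N. SA a e f n (scaleC (c k) (e k)))"
        unfolding v by (rule linear_sum[OF bounded_linear.linear[OF bl_SA[OF summ]]])
      also have "\<dots> = (\<Sum>k<N. scaleC (c k * a n k) (e k))"
      proof (rule sum.cong[OF refl])
        fix k
        have "SA a e f n (e k) = scaleC (a n k) (e k)" by (rule SA_e[OF biorth nondeg])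
        then show "SA a e f n (scaleC (c k) (e k)) = scaleC (c k * a n k) (e k)"
          by (simp add: SA_scaleC[OF summ] scaleC_scaleC)
      qed
      finally show ?thesis .
    qed
    have "(\<lambda>n. \<Sum>k<N. scaleC (c k * a n k) (e k)) \<longlonglongrightarrow> (\<Sum>k<N. scaleC (c k * 1) (e k))"
      by (intro tendsto_sum bounded_linear.tendsto[OF bl_scaleC_left] tendsto_mult tendsto_const conv_a)
    moreover have "(\<Sum>k<N. scaleC (c k * 1) (e k)) = v" unfolding v by simp
    ultimately show ?thesis unfolding eq by simp
  qed
  have dense: "\<exists>v\<in>V. norm (x - v) < \<epsilon>" if eps: "\<epsilon> > 0" for x \<epsilon>
  proof -
    define \<delta> where "\<delta> = (\<epsilon> / (Mp + 1))^2"
    have \<delta>pos: "\<delta> > 0" using eps Mp by (simp add: \<delta>_def)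
    have s\<delta>: "sqrt \<delta> = \<epsilon> / (Mp + 1)" using eps Mp by (simp add: \<delta>_def)
    define D where "D = (\<lambda>v. (norm (x - v))^2) ` V"
    have Dne: "D \<noteq> {}" using V0 by (auto simp: D_def)
    have Dbdd: "bdd_below D" unfolding D_def by (rule bdd_belowI[of _ 0]) auto
    have "Inf D < Inf D + \<delta>" using \<delta>pos by simp
    then obtain y where "y \<in> D" "y < Inf D + \<delta>" using cInf_less_iff[OF Dne Dbdd] by blast
    then obtain v where vV: "v \<in> V" and vmin: "(norm (x - v))^2 < Inf D + \<delta>" by (auto simp: D_def)
    have low: "Inf D \<le> (norm (x - v'))^2" if "v' \<in> V" for v'
      using that by (intro cInf_lower[OF _ Dbdd]) (auto simp: D_def)
    define w where "w = x - v"
    have orth: "cmod (cinner w u) \<le> sqrt \<delta> * norm u" if uV: "u \<in> V" for u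
    proof -
      have "(cmod (cinner w u))^2 \<le> \<delta> * (norm u)^2"
      proof (rule approx_orth)
        fix t
        have eqw: "w - scaleC t u = x - (v + scaleC t u)" by (simp add: w_def algebra_simps)
        have "Inf D \<le> (norm (x - (v + scaleC t u)))^2" using low Vlin vV uV by blast
        then have A: "Inf D \<le> (norm (w - scaleC t u))^2" by (simp only: eqw)
        have B: "(norm w)^2 < Inf D + \<delta>" using vmin by (simp only: w_def)
        show "(norm w)^2 \<le> (norm (w - scaleC t u))^2 + \<delta>" using A B by linarith
      qed
      then have "sqrt ((cmod (cinner w u))^2) \<le> sqrt (\<delta> * (norm u)^2)" by (rule real_sqrt_le_mono)
      then show ?thesis by (simp add: real_sqrt_mult)
    qed
    have orth2: "cmod (cinner w (SA a e f n w)) \<le> sqrt \<delta> * (Mp * norm w)" for n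
    proof -
      define p where "p K = (\<Sum>k<K. scaleC (a n k * (cinner w (f k) / cinner (e k) (f k))) (e k))" for K
      define cc where "cc k = a n k * (cinner w (f k) / cinner (e k) (f k))" for k
      have "p K = (\<Sum>k<K. scaleC (cc k) (e k))" for K unfolding p_def cc_def ..
      then have pV: "p K \<in> V" for K unfolding V_def by blast
      have pl: "p \<longlonglongrightarrow> SA a e f n w" using SA_sums[OF summ] unfolding sums_def p_def .
      have l1: "(\<lambda>K. cmod (cinner w (p K))) \<longlonglongrightarrow> cmod (cinner w (SA a e f n w))"
        by (intro tendsto_norm bounded_linear.tendsto[OF bl_cinner_right] pl)
      have l2: "(\<lambda>K. sqrt \<delta> * norm (p K)) \<longlonglongrightarrow> sqrt \<delta> * norm (SA a e f n w)"
        by (intro tendsto_mult tendsto_const tendsto_norm pl)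
      have "cmod (cinner w (SA a e f n w)) \<le> sqrt \<delta> * norm (SA a e f n w)"
        by (rule tendsto_le[OF trivial_limit_sequentially l2 l1]) (intro always_eventually allI orth pV)
      also have "\<dots> \<le> sqrt \<delta> * (Mp * norm w)" using \<delta>pos by (intro mult_left_mono MpB) simp
      finally show ?thesis .
    qed
    have nw2: "(norm w)^2 \<le> sqrt \<delta> * (Mp * norm w)"
    proof -
      have lim: "(\<lambda>n. cmod (cinner (SA a e f n w) w)) \<longlonglongrightarrow> cmod (cinner w w)" by (intro tendsto_norm W')
      have bnd: "cmod (cinner (SA a e f n w) w) \<le> sqrt \<delta> * (Mp * norm w)" for n
        using orth2[of n] cmod_cinner_commute[of "SA a e f n w" w] by linarith
      have "cmod (cinner w w) \<le> sqrt \<delta> * (Mp * norm w)"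
        by (rule LIMSEQ_le_const2[OF lim]) (use bnd in blast)
      moreover have "cmod (cinner w w) = (norm w)^2" by (rule cmod_cinner_self)
      ultimately show ?thesis by simp
    qed
    have "norm w \<le> sqrt \<delta> * Mp"
    proof (cases "norm w = 0")
      case True then show ?thesis using Mp \<delta>pos by simp
    next
      case False
      then have pos: "0 < norm w" by simp
      have "norm w * norm w \<le> (sqrt \<delta> * Mp) * norm w" using nw2 by (simp add: power2_eq_square ac_simps)
      then show ?thesis by (rule mult_right_le_imp_le[OF _ pos])
    qed
    also have "\<dots> < \<epsilon>" unfolding s\<delta> using eps Mp by (simp add: field_simps)
    finally show ?thesis using vV unfolding w_def by blast
  qed
  show ?thesis
  proof (rule LIMSEQ_I)
    fix r :: real assume r: "0 < r"
    define \<eta> where "\<eta> = r / (3 * (Mp + 1))"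
    have \<eta>: "\<eta> > 0" using r Mp by (simp add: \<eta>_def)
    have \<eta>eq: "(Mp + 1) * \<eta> = r / 3" using Mp by (simp add: \<eta>_def field_simps)
    obtain v where vV: "v \<in> V" and hv: "norm (h - v) < \<eta>" using dense[OF \<eta>] by blast
    have r3: "r / 3 > 0" using r by simp
    obtain N where N: "\<forall>n\<ge>N. norm (SA a e f n v - v) < r / 3" using LIMSEQ_D[OF Vconv[OF vV] r3] by blast
    have "norm (SA a e f n h - h) < r" if "n \<ge> N" for n
    proof -
      have d: "SA a e f n (h - v) = SA a e f n h - SA a e f n v"
        by (rule linear_diff[OF bounded_linear.linear[OF bl_SA[OF summ]]])
      have eq: "SA a e f n h - h = SA a e f n (h - v) + (SA a e f n v - v) + (v - h)"
        unfolding d by (simp add: algebra_simps)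
      have "norm (SA a e f n h - h) \<le> norm (SA a e f n (h - v)) + norm (SA a e f n v - v) + norm (v - h)"
        unfolding eq by (meson add_mono norm_triangle_ineq order_trans order_refl)
      moreover have "norm (SA a e f n (h - v)) \<le> Mp * norm (h - v)" by (rule MpB)
      moreover have "Mp * norm (h - v) \<le> Mp * \<eta>" using hv Mp by (intro mult_left_mono) auto
      moreover have "norm (v - h) = norm (h - v)" by (rule norm_minus_commute)
      moreover have "norm (SA a e f n v - v) < r / 3" using N that by blast
      moreover have "Mp * \<eta> + \<eta> = r / 3" using \<eta>eq by (simp add: algebra_simps)
      ultimately show ?thesis using hv r by linarith
    qed
    then show "\<exists>no. \<forall>n\<ge>no. norm (SA a e f n h - h) < r" by blast
  qed
qed

lemma tendsto_cnj_iff': "(\<lambda>n. cnj (X n)) \<longlonglongrightarrow> cnj l \<longleftrightarrow> X \<longlonglongrightarrow> l"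
proof
  assume "(\<lambda>n. cnj (X n)) \<longlonglongrightarrow> cnj l"
  from tendsto_cnj[OF this] show "X \<longlonglongrightarrow> l" by simp
next
  assume "X \<longlonglongrightarrow> l"
  from tendsto_cnj[OF this] show "(\<lambda>n. cnj (X n)) \<longlonglongrightarrow> cnj l" .
qed

lemma norm_to_weak: "X \<longlonglongrightarrow> l \<Longrightarrow> weak_conv X (l::'a::chilbert_space)"
  unfolding weak_conv_def by (auto intro: bounded_linear.tendsto[OF bl_cinner_left])

lemma weak_adj_iff:
  fixes e f :: "nat \<Rightarrow> 'a::chilbert_space" and a :: "nat \<Rightarrow> nat \<Rightarrow> complex"
  assumes summ: "\<And>n. summable (\<lambda>k. norm (a n k) *
                  (norm (e k) * norm (f k) / norm (cinner (e k) (f k))))"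
  shows "(\<forall>h. weak_conv (\<lambda>n. SA a e f n h) h) \<longleftrightarrow> (\<forall>h. weak_conv (\<lambda>n. SA_adj a e f n h) h)"
proof -
  have key: "(\<lambda>n. cinner (SA a e f n h) y) \<longlonglongrightarrow> cinner h y \<longleftrightarrow>
             (\<lambda>n. cinner (SA_adj a e f n y) h) \<longlonglongrightarrow> cinner y h" for h y
  proof -
    have 1: "cinner (SA a e f n h) y = cnj (cinner (SA_adj a e f n y) h)" for n
      unfolding adjoint[OF summ] by (rule cinner_commute)
    have 2: "cinner h y = cnj (cinner y h)" by (rule cinner_commute)
    show ?thesis unfolding 1 2 by (rule tendsto_cnj_iff')
  qed
  show ?thesis unfolding weak_conv_def using key by blast
qed

theorem theorem6p2:
  fixes e f :: "nat \<Rightarrow> 'a::chilbert_space"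
    and a :: "nat \<Rightarrow> nat \<Rightarrow> complex"
  assumes biorth: "\<And>j k. j \<noteq> k \<Longrightarrow> cinner (e j) (f k) = 0"
    and nondeg: "\<And>k. cinner (e k) (f k) \<noteq> 0"
    and summ: "\<And>n. summable (\<lambda>k. norm (a n k) *
                  (norm (e k) * norm (f k) / norm (cinner (e k) (f k))))"
  shows "((\<forall>h. weak_conv (\<lambda>n. SA a e f n h) h) \<longleftrightarrow> (\<forall>h. (\<lambda>n. SA a e f n h) \<longlonglongrightarrow> h))
       \<and> ((\<forall>h. weak_conv (\<lambda>n. SA a e f n h) h) \<longleftrightarrow> (\<forall>h. weak_conv (\<lambda>n. SA_adj a e f n h) h))
       \<and> ((\<forall>h. weak_conv (\<lambda>n. SA a e f n h) h) \<longleftrightarrow> (\<forall>h. (\<lambda>n. SA_adj a e f n h) \<longlonglongrightarrow> h))"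
proof -
  have biorth': "cinner (f j) (e k) = 0" if "j \<noteq> k" for j k
  proof -
    have "cinner (e k) (f j) = 0" using biorth that by simp
    then show ?thesis by (subst cinner_commute) simp
  qed
  have nondeg': "cinner (f k) (e k) \<noteq> 0" for k
  proof
    assume "cinner (f k) (e k) = 0"
    then have "cinner (e k) (f k) = 0" by (subst cinner_commute) simp
    then show False using nondeg by blast
  qed
  have summ': "summable (\<lambda>k. norm (cnj (a n k)) *
                  (norm (f k) * norm (e k) / norm (cinner (f k) (e k))))" for n
    by (rule summ_swap[where a=a and e=e and f=f, OF summ])
  have P1: "(\<forall>h. weak_conv (\<lambda>n. SA a e f n h) h) \<longleftrightarrow> (\<forall>h. (\<lambda>n. SA a e f n h) \<longlonglongrightarrow> h)"
    using weak_to_norm[where e=e and f=f and a=a, OF biorth nondeg summ] norm_to_weak by blast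
  have P1': "(\<forall>h. weak_conv (\<lambda>n. SA (\<lambda>n k. cnj (a n k)) f e n h) h) \<longleftrightarrow>
             (\<forall>h. (\<lambda>n. SA (\<lambda>n k. cnj (a n k)) f e n h) \<longlonglongrightarrow> h)"
    using weak_to_norm[where e=f and f=e and a="\<lambda>n k. cnj (a n k)", OF biorth' nondeg' summ'] norm_to_weak by blast
  have P2: "(\<forall>h. weak_conv (\<lambda>n. SA a e f n h) h) \<longleftrightarrow> (\<forall>h. weak_conv (\<lambda>n. SA_adj a e f n h) h)"
    by (rule weak_adj_iff[OF summ])
  have P3: "(\<forall>h. weak_conv (\<lambda>n. SA a e f n h) h) \<longleftrightarrow> (\<forall>h. (\<lambda>n. SA_adj a e f n h) \<longlonglongrightarrow> h)"
    using P2 P1' unfolding SA_adj_eq by simp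
  show ?thesis using P1 P2 P3 by blast
qed

end
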